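(* Let $k\ge1$. Every $k$-primitive element $f\in\mathcal{A}$ can be written as a polynomial of degree at most $k$, with complex coefficients, in finitely many $1$-primitive elements of $\mathcal{A}$.
   Context: Let $G$ be an abelian group written additively with identity $e=0$ (in the paper, $G$ is the group, under pointwise addition, of finite complex linear combinations of characteristic functions of measurable subsets of a measurable set $H$). Let $\mathcal{A}$ be an algebra of complex-valued functions on $G$ (pointwise operations, containing the constants) such that for every $f\in\mathcal{A}$ there exist finitely many $f'_i,f''_i\in\mathcal{A}$ with $f(x+y)=\sum_i f'_i(x)f''_i(y)$ for all $x,y\in G$ (so that the coproduct $\Delta f(x,y)=f(x+y)$ makes $\mathcal{A}$ a commutative, cocommutative bialgebra with counit $\epsilon(f)=f(0)$; in the paper $\mathcal{A}$ is the algebra of smooth functions on $G$). Coderivatives: for $f\colon G\to\mathbb{C}$ define $(\mathcal{L}f)(x_0,x_1)=f(x_0+x_1)-f(x_0)$ and recursively $(\mathcal{L}^k f)(x_0,x_1,\dots,x_k)=(\mathcal{L}^{k-1}f)(x_0+x_1,x_2,\dots,x_k)-(\mathcal{L}^{k-1}f)(x_0,x_2,\dots,x_k)$. Write $(\mathcal{L}^kf)(e)$ for the function $(x_1,\dots,x_k)\mapsto(\mathcal{L}^kf)(0,x_1,\dots,x_k)$ on $G^k$; explicitly $(\mathcal{L}^kf)(e)(x_1,\dots,x_k)=\sum_{S\subseteq\{1,\dots,k\}}(-1)^{k-|S|}f\big(\sum_{i\in S}x_i\big)$. A function $f$ is called $k$-primitive if $(\mathcal{L}^r f)(e)=0$ for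 all $r>k$ while $(\mathcal{L}^k f)(e)\neq0$. In particular $f$ is $1$-primitive iff $f$ is nonconstant and $f(x+y)-f(x)-f(y)+f(0)=0$ for all $x,y$ (i.e. $f-f(0)$ is additive). *)

theory Defs
  imports Complex_Main
begin

text \<open>Coderivatives. coder f x0 [x1,...,xk] is (L^k f)(x0,x1,...,xk), following the
recursive definition (L^k f)(x0,x1,...,xk) = (L^(k-1) f)(x0+x1,x2,...,xk) - (L^(k-1) f)(x0,x2,...,xk),
with L^0 f = f.\<close>
fun coder :: "('a::ab_group_add \<Rightarrow> complex) \<Rightarrow> 'a \<Rightarrow> 'a list \<Rightarrow> complex" where
  "coder f x0 [] = f x0"
| "coder f x0 (x1 # xs) = coder f (x0 + x1) xs - coder f x0 xs"

text \<open>(L^k f)(e) as a function on G^k (tuples represented as lists of length k).\<close>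
definition coder_e :: "nat \<Rightarrow> ('a::ab_group_add \<Rightarrow> complex) \<Rightarrow> 'a list \<Rightarrow> complex" where
  "coder_e k f = (\<lambda>xs. if length xs = k then coder f 0 xs else 0)"

definition k_primitive :: "nat \<Rightarrow> ('a::ab_group_add \<Rightarrow> complex) \<Rightarrow> bool" where
  "k_primitive k f \<longleftrightarrow>
     (\<forall>r>k. \<forall>xs. length xs = r \<longrightarrow> coder f 0 xs = 0) \<and>
     (\<exists>xs. length xs = k \<and> coder f 0 xs \<noteq> 0)"

definition coproduct_algebra :: "('a::ab_group_add \<Rightarrow> complex) set \<Rightarrow> bool" where
  "coproduct_algebra A \<longleftrightarrow>
     (\<forall>c. (\<lambda>_. c) \<in> A) \<and>
     (\<forall>f\<in>A. \<forall>g\<in>A. (\<lambda>x. f x + g x) \<in> A) \<and>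
     (\<forall>f\<in>A. \<forall>g\<in>A. (\<lambda>x. f x * g x) \<in> A) \<and>
     (\<forall>c. \<forall>f\<in>A. (\<lambda>x. c * f x) \<in> A) \<and>
     (\<forall>f\<in>A. \<exists>n f' f''. (\<forall>i<n. f' i \<in> A \<and> f'' i \<in> A) \<and>
        (\<forall>x y. f (x + y) = (\<Sum>i<(n::nat). f' i x * f'' i y)))"

definition multi_indices :: "nat \<Rightarrow> nat \<Rightarrow> (nat \<Rightarrow> nat) set" where
  "multi_indices n k = {\<alpha>. (\<forall>i\<ge>n. \<alpha> i = 0) \<and> (\<Sum>i<n. \<alpha> i) \<le> k}"

end

theory Submission
  imports Defs "HOL-Library.Function_Algebras"
begin

lemma coder_shift: "coder h x0 ys = coder h 0 (x0 # ys) + coder h 0 ys" by simp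

lemma coder_append_zero:
  assumes "\<And>x0. coder h x0 ys = 0"
  shows "coder h x0 (zs @ ys) = 0"
  using assms by (induction zs arbitrary: x0) auto

definition deg_le :: "('a::ab_group_add \<Rightarrow> complex) \<Rightarrow> nat \<Rightarrow> bool" where
  "deg_le h d \<longleftrightarrow> (\<forall>x0 ys. d < length ys \<longrightarrow> coder h x0 ys = 0)"

lemma deg_le_from_zero:
  assumes "\<And>ys. d < length ys \<Longrightarrow> coder h 0 ys = 0"
  shows "deg_le h d"
  unfolding deg_le_def
proof (intro allI impI)
  fix x0 and ys :: "'a list" assume "d < length ys"
  then have "coder h 0 (x0 # ys) = 0" "coder h 0 ys = 0" by (auto intro!: assms simp del: coder.simps)
  then show "coder h x0 ys = 0" using coder_shift[of h x0 ys] by (simp del: coder.simps)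
qed

lemma coder_lin: "coder (\<lambda>x. c * f x + g x) x0 ys = c * coder f x0 ys + coder g x0 ys"
  by (induction ys arbitrary: x0) (auto simp: algebra_simps)

lemma coder_zero: "coder (\<lambda>x. 0) x0 ys = 0"
  by (induction ys arbitrary: x0) auto

lemma coder_const: "coder (\<lambda>x. c) x0 (y # ys) = 0"
  by (induction ys arbitrary: x0 y) auto

lemma coder_sum_list: "coder (\<lambda>x. \<Sum>u\<leftarrow>L. G u x) x0 ys = (\<Sum>u\<leftarrow>L. coder (G u) x0 ys)"
proof (induction L)
  case Nil then show ?case using coder_zero by simp
next
  case (Cons a L)
  have "coder (\<lambda>x. \<Sum>u\<leftarrow>a#L. G u x) x0 ys = coder (\<lambda>x. 1 * G a x + (\<Sum>u\<leftarrow>L. G u x)) x0 ys" by simp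
  also have "\<dots> = 1 * coder (G a) x0 ys + coder (\<lambda>x. \<Sum>u\<leftarrow>L. G u x) x0 ys" by (rule coder_lin)
  finally show ?case using Cons by simp
qed

lemma coder_translate: "coder (\<lambda>x. h (x + t)) x0 ys = coder h (x0 + t) ys"
  by (induction ys arbitrary: x0) (auto simp: ac_simps)

lemma coder_Cons_delta: "coder h x0 (y # ys) = coder (\<lambda>x. h (x + y) - h x) x0 ys"
proof -
  have eq: "(\<lambda>x. h (x + y) - h x) = (\<lambda>x. (-1) * h x + h (x + y))" by (simp add: fun_eq_iff)
  have "coder (\<lambda>x. h (x + y) - h x) x0 ys = (-1) * coder h x0 ys + coder (\<lambda>x. h (x + y)) x0 ys"
    unfolding eq by (rule coder_lin)
  also have "\<dots> = coder h x0 (y # ys)" by (simp add: coder_translate)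
  finally show ?thesis by simp
qed

lemma coder_swap: "coder h x0 (a # b # zs) = coder h x0 (b # a # zs)"
  by (simp add: ac_simps)

lemma coder_swap_at: "coder h x0 (qs @ a # b # zs) = coder h x0 (qs @ b # a # zs)"
proof (induction qs arbitrary: x0)
  case Nil then show ?case by (metis append_Nil coder_swap)
next
  case (Cons q qs) then show ?case by simp
qed

lemma coder_move: "coder h x0 (ps @ y # zs) = coder h x0 (y # ps @ zs)"
proof (induction ps arbitrary: x0)
  case Nil show ?case by simp
next
  case (Cons p ps)
  have "coder h x0 ((p # ps) @ y # zs) = coder h (x0 + p) (ps @ y # zs) - coder h x0 (ps @ y # zs)" by simp
  also have "\<dots> = coder h (x0 + p) (y # ps @ zs) - coder h x0 (y # ps @ zs)" using Cons by (simp del: coder.simps)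
  also have "\<dots> = coder h x0 (p # y # ps @ zs)" by simp
  also have "\<dots> = coder h x0 (y # p # ps @ zs)" by (rule coder_swap)
  finally show ?case by simp
qed

lemma indep_x0:
  assumes "deg_le h (Suc e)" "length ys = Suc e"
  shows "coder h x0 ys = coder h 0 ys"
proof -
  have "coder h 0 (x0 # ys) = 0" using assms unfolding deg_le_def by (simp del: coder.simps)
  then show ?thesis using coder_shift[of h x0 ys] by (simp del: coder.simps)
qed

lemma additive_front:
  assumes "deg_le h (Suc e)" "length ys = e"
  shows "coder h 0 ((y + z) # ys) = coder h 0 (y # ys) + coder h 0 (z # ys)"
proof -
  have 1: "coder h y (z # ys) = coder h 0 (z # ys)" using indep_x0[OF assms(1), of "z # ys" y] assms(2) by simp
  have 2: "coder h y (z # ys) = coder h (y + z) ys - coder h y ys" by simp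
  have 3: "coder h 0 ((y + z) # ys) = coder h (y + z) ys - coder h 0 ys" by simp
  have 4: "coder h 0 (y # ys) = coder h y ys - coder h 0 ys" by simp
  show ?thesis unfolding 3 4 using 1 2 by (simp del: coder.simps add: algebra_simps)
qed

lemma additive_at:
  assumes "deg_le h (Suc e)" "length qs + length zs = e"
  shows "coder h 0 (qs @ (a + b) # zs) = coder h 0 (qs @ a # zs) + coder h 0 (qs @ b # zs)"
proof -
  have "coder h 0 ((a + b) # qs @ zs) = coder h 0 (a # qs @ zs) + coder h 0 (b # qs @ zs)"
    using additive_front[OF assms(1), of "qs @ zs" a b] assms(2) by simp
  then show ?thesis by (simp only: coder_move)
qed

fun tsl :: "'a::ab_group_add \<Rightarrow> 'a list \<Rightarrow> 'a list list" where
  "tsl y [] = []"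
| "tsl y (t # rest) = map (\<lambda>s. y + s) rest # map (\<lambda>u. t # u) (tsl y rest)"

lemma tsl_length: "length (tsl y ts) = length ts" by (induction ts) auto
lemma tsl_elem_length: "u \<in> set (tsl y ts) \<Longrightarrow> length u + 1 = length ts"
  by (induction ts arbitrary: u) auto

lemma telescope:
  assumes "deg_le h (Suc e)" "length qs + length ts = Suc e"
  shows "coder h 0 (qs @ map (\<lambda>t. x + y + t) ts) - coder h 0 (qs @ map (\<lambda>t. x + t) ts)
     = (\<Sum>u\<leftarrow>tsl y ts. coder h 0 (qs @ y # map (\<lambda>t. x + t) u))"
  using assms(2)
proof (induction ts arbitrary: qs)
  case Nil then show ?case by simp
next
  case (Cons t rest)
  let ?F = "coder h 0"
  let ?R1 = "map (\<lambda>s. x + y + s) rest" and ?R0 = "map (\<lambda>s. x + s) rest"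
  have add: "?F (qs @ (y + (x + t)) # ?R1) = ?F (qs @ y # ?R1) + ?F (qs @ (x + t) # ?R1)"
    by (rule additive_at[OF assms(1)]) (use Cons.prems in simp)
  have IH: "?F ((qs @ [x + t]) @ ?R1) - ?F ((qs @ [x + t]) @ ?R0)
      = (\<Sum>u\<leftarrow>tsl y rest. ?F ((qs @ [x + t]) @ y # map (\<lambda>t. x + t) u))"
    by (rule Cons.IH) (use Cons.prems in simp)
  have sw: "?F ((qs @ [x + t]) @ y # M) = ?F (qs @ y # (x + t) # M)" for M
    using coder_swap_at[of h 0 qs "x+t" y M] by (simp del: coder.simps)
  have e1: "x + y + t = y + (x + t)" by (simp add: ac_simps)
  have "?F (qs @ map (\<lambda>t. x + y + t) (t # rest)) - ?F (qs @ map (\<lambda>t. x + t) (t # rest))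
     = ?F (qs @ (y + (x + t)) # ?R1) - ?F (qs @ (x + t) # ?R0)" by (subst e1[symmetric]) (simp del: coder.simps)
  also have "\<dots> = ?F (qs @ y # ?R1) + (?F ((qs @ [x + t]) @ ?R1) - ?F ((qs @ [x + t]) @ ?R0))"
    using add by (simp del: coder.simps)
  also have "\<dots> = ?F (qs @ y # ?R1) + (\<Sum>u\<leftarrow>tsl y rest. ?F (qs @ y # (x + t) # map (\<lambda>t. x + t) u))"
    unfolding IH sw by simp
  also have "\<dots> = (\<Sum>u\<leftarrow>tsl y (t # rest). ?F (qs @ y # map (\<lambda>t. x + t) u))"
    by (simp del: coder.simps add: o_def add.assoc)
  finally show ?case .
qed

lemma crux:
  assumes "deg_le h (Suc e)"
  shows "length qs + l = Suc e \<Longrightarrow> length ts = l \<Longrightarrow>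
     (l < length ys \<longrightarrow> coder (\<lambda>x. coder h 0 (qs @ map (\<lambda>t. x + t) ts)) x0 ys = 0) \<and>
     (length ys = l \<longrightarrow> coder (\<lambda>x. coder h 0 (qs @ map (\<lambda>t. x + t) ts)) x0 ys = fact l * coder h 0 (qs @ ys))"
proof (induction l arbitrary: qs ts ys x0)
  case 0
  then have ts: "ts = []" by simp
  show ?case
  proof (cases ys)
    case Nil then show ?thesis using ts by simp
  next
    case (Cons y ys')
    have "coder (\<lambda>x. coder h 0 (qs @ map (\<lambda>t. x + t) ts)) x0 ys = 0"
      using coder_const[of "coder h 0 qs" x0 y ys'] ts Cons by (simp del: coder.simps)
    then show ?thesis using Cons ts by simp
  qed
next
  case (Suc l)
  define D where "D = (\<lambda>x. coder h 0 (qs @ map (\<lambda>t. x + t) ts))"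
  show ?case
  proof (cases ys)
    case Nil then show ?thesis by simp
  next
    case (Cons y ys')
    have delta: "(\<lambda>x. D (x + y) - D x) = (\<lambda>x. \<Sum>u\<leftarrow>tsl y ts. coder h 0 ((qs @ [y]) @ map (\<lambda>t. x + t) u))"
      using telescope[OF assms, of qs ts _ y] Suc.prems unfolding D_def by (simp add: fun_eq_iff del: coder.simps)
    have "coder D x0 ys = coder (\<lambda>x. D (x + y) - D x) x0 ys'" using Cons coder_Cons_delta by simp
    also have "\<dots> = (\<Sum>u\<leftarrow>tsl y ts. coder (\<lambda>x. coder h 0 ((qs @ [y]) @ map (\<lambda>t. x + t) u)) x0 ys')"
      unfolding delta by (rule coder_sum_list)
    finally have eq: "coder D x0 ys = \<dots>" .
    have IH: "(l < length ys' \<longrightarrow> coder (\<lambda>x. coder h 0 ((qs @ [y]) @ map (\<lambda>t. x + t) u)) x0 ys' = 0) \<and>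
       (length ys' = l \<longrightarrow> coder (\<lambda>x. coder h 0 ((qs @ [y]) @ map (\<lambda>t. x + t) u)) x0 ys' = fact l * coder h 0 ((qs @ [y]) @ ys'))"
      if "u \<in> set (tsl y ts)" for u
      using Suc.IH[of "qs @ [y]" u] tsl_elem_length[OF that] Suc.prems by simp
    show ?thesis
    proof (intro conjI impI)
      assume "Suc l < length ys"
      then have "l < length ys'" using Cons by simp
      then have "coder D x0 ys = (\<Sum>u\<leftarrow>tsl y ts. 0)"
        unfolding eq using IH by (intro arg_cong[where f=sum_list] map_cong) auto
      then show "coder (\<lambda>x. coder h 0 (qs @ map (\<lambda>t. x + t) ts)) x0 ys = 0" unfolding D_def by simp
    next
      assume "length ys = Suc l"
      then have "length ys' = l" using Cons by simp
      then have "coder D x0 ys = (\<Sum>u\<leftarrow>tsl y ts. fact l * coder h 0 (qs @ ys))"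
        unfolding eq using IH Cons by (intro arg_cong[where f=sum_list] map_cong) auto
      also have "\<dots> = fact (Suc l) * coder h 0 (qs @ ys)"
        using tsl_length[of y ts] Suc.prems by (simp add: sum_list_triv del: coder.simps)
      finally show "coder (\<lambda>x. coder h 0 (qs @ map (\<lambda>t. x + t) ts)) x0 ys = fact (Suc l) * coder h 0 (qs @ ys)"
        unfolding D_def .
    qed
  qed
qed

lemma diag:
  assumes "deg_le h (Suc e)"
  shows "length ys = Suc e \<Longrightarrow> coder (\<lambda>x. coder h 0 (replicate (Suc e) x)) x0 ys = fact (Suc e) * coder h 0 ys"
    and "Suc e < length ys \<Longrightarrow> coder (\<lambda>x. coder h 0 (replicate (Suc e) x)) x0 ys = 0"
  using crux[OF assms, of "[]" "Suc e" "replicate (Suc e) 0" ys x0] by (simp_all add: map_replicate del: coder.simps)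

inductive pp :: "('a \<Rightarrow> complex) set \<Rightarrow> nat \<Rightarrow> ('a \<Rightarrow> complex) \<Rightarrow> bool" for E where
  pconst: "pp E d (\<lambda>_. c)"
| padd: "pp E d p \<Longrightarrow> pp E d q \<Longrightarrow> pp E d (\<lambda>x. p x + q x)"
| pscale: "pp E d p \<Longrightarrow> pp E d (\<lambda>x. c * p x)"
| pgmul: "g \<in> E \<Longrightarrow> pp E d p \<Longrightarrow> pp E (Suc d) (\<lambda>x. g x * p x)"
| pmono: "pp E d p \<Longrightarrow> pp E (Suc d) p"

lemma pp_le: "pp E d p \<Longrightarrow> d \<le> d' \<Longrightarrow> pp E d' p"
proof (induction d')
  case 0 then show ?case by simp
next
  case (Suc d')
  show ?case
  proof (cases "d = Suc d'")
    case True then show ?thesis using Suc by simp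
  next
    case False then have "d \<le> d'" using Suc.prems by simp
    then show ?thesis using Suc by (intro pp.pmono) simp
  qed
qed

lemma pp_subset: "pp E d p \<Longrightarrow> E \<subseteq> E' \<Longrightarrow> pp E' d p"
proof (induction rule: pp.induct)
  case (pconst d c) show ?case by (rule pp.pconst)
next
  case (padd d p q) then show ?case by (intro pp.padd) simp_all
next
  case (pscale d p c) then show ?case by (intro pp.pscale) simp_all
next
  case (pgmul g d p) then show ?case by (intro pp.pgmul) auto
next
  case (pmono d p) then show ?case by (intro pp.pmono) simp_all
qed

lemma pp_sum: "(\<forall>j<(r::nat). pp E d (f j)) \<Longrightarrow> pp E d (\<lambda>x. \<Sum>j<r. f j x)"
proof (induction r)
  case 0 then show ?case using pp.pconst[of E d 0] by simp
next
  case (Suc r)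
  then have "pp E d (\<lambda>x. (\<Sum>j<r. f j x) + f r x)" by (intro pp.padd) auto
  then show ?case by simp
qed

lemma pp_in:
  assumes "pp E d p" "E \<subseteq> A" "coproduct_algebra A"
  shows "p \<in> A"
  using assms
proof (induction rule: pp.induct)
  case (pconst d c) then show ?case unfolding coproduct_algebra_def by blast
next
  case (padd d p q) then show ?case unfolding coproduct_algebra_def by blast
next
  case (pscale d p c) then show ?case unfolding coproduct_algebra_def by blast
next
  case (pgmul g d p) then show ?case unfolding coproduct_algebra_def by blast
next
  case (pmono d p) then show ?case by blast
qed

lemma dec:
  assumes "\<And>ps zs x. length ps + length zs = e \<Longrightarrow> F (ps @ x # zs) = (\<Sum>j<(r::nat). F (ps @ p j # zs) * g j x)"
  shows "length ps + l = Suc e \<Longrightarrow> pp (g ` {..<r}) l (\<lambda>x. F (ps @ replicate l x))"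
proof (induction l arbitrary: ps)
  case 0 then show ?case by (simp add: pp.pconst)
next
  case (Suc l)
  have eq: "(\<lambda>x. F (ps @ replicate (Suc l) x)) = (\<lambda>x. \<Sum>j<r. g j x * F ((ps @ [p j]) @ replicate l x))"
  proof (rule ext)
    fix x
    show "F (ps @ replicate (Suc l) x) = (\<Sum>j<r. g j x * F ((ps @ [p j]) @ replicate l x))"
    proof -
      have "F (ps @ replicate (Suc l) x) = F (ps @ x # replicate l x)" by simp
      also have "\<dots> = (\<Sum>j<r. F (ps @ p j # replicate l x) * g j x)" by (rule assms) (use Suc.prems in simp)
      also have "\<dots> = (\<Sum>j<r. g j x * F ((ps @ [p j]) @ replicate l x))" by (simp add: mult.commute)
      finally show ?thesis .
    qed
  qed
  have "pp (g ` {..<r}) (Suc l) (\<lambda>x. g j x * F ((ps @ [p j]) @ replicate l x))" if "j < r" for j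
  proof (rule pp.pgmul)
    show "g j \<in> g ` {..<r}" using that by simp
    have "length (ps @ [p j]) + l = Suc e" using Suc.prems by simp
    then show "pp (g ` {..<r}) l (\<lambda>x. F ((ps @ [p j]) @ replicate l x))" by (rule Suc.IH)
  qed
  then show ?case unfolding eq
    using pp_sum[where f="\<lambda>j x. g j x * F ((ps @ [p j]) @ replicate l x)" and r=r and E="g ` {..<r}" and d="Suc l"]
    by blast
qed

lemma finite_bounded_funs: "finite {\<alpha>::nat\<Rightarrow>nat. (\<forall>i\<ge>n. \<alpha> i = 0) \<and> (\<forall>i. \<alpha> i \<le> k)}"
proof (induction n)
  case 0
  have "{\<alpha>::nat\<Rightarrow>nat. (\<forall>i\<ge>0. \<alpha> i = 0) \<and> (\<forall>i. \<alpha> i \<le> k)} \<subseteq> {\<lambda>_. 0}" by auto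
  then show ?case by (rule finite_subset) simp
next
  case (Suc n)
  let ?S = "{\<alpha>::nat\<Rightarrow>nat. (\<forall>i\<ge>n. \<alpha> i = 0) \<and> (\<forall>i. \<alpha> i \<le> k)}"
  have "{\<alpha>::nat\<Rightarrow>nat. (\<forall>i\<ge>Suc n. \<alpha> i = 0) \<and> (\<forall>i. \<alpha> i \<le> k)} \<subseteq> (\<lambda>(\<alpha>, v). \<alpha>(n := v)) ` (?S \<times> {..k})"
  proof
    fix \<beta> assume \<beta>: "\<beta> \<in> {\<alpha>::nat\<Rightarrow>nat. (\<forall>i\<ge>Suc n. \<alpha> i = 0) \<and> (\<forall>i. \<alpha> i \<le> k)}"
    have "\<beta> = (\<lambda>(\<alpha>, v). \<alpha>(n := v)) (\<beta>(n := 0), \<beta> n)" by auto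
    moreover have "(\<beta>(n := 0), \<beta> n) \<in> ?S \<times> {..k}" using \<beta> by (auto simp: Suc_le_eq)
    ultimately show "\<beta> \<in> (\<lambda>(\<alpha>, v). \<alpha>(n := v)) ` (?S \<times> {..k})" by blast
  qed
  then show ?case using Suc by (auto intro: finite_subset)
qed

lemma MI_finite: "finite (multi_indices n k)"
proof -
  have "multi_indices n k \<subseteq> {\<alpha>::nat\<Rightarrow>nat. (\<forall>i\<ge>n. \<alpha> i = 0) \<and> (\<forall>i. \<alpha> i \<le> k)}"
  proof (safe)
    fix \<alpha> i assume a: "\<alpha> \<in> multi_indices n k"
    show "\<alpha> i \<le> k"
    proof (cases "i < n")
      case True
      then have "\<alpha> i \<le> (\<Sum>j<n. \<alpha> j)" by (intro member_le_sum) auto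
      then show ?thesis using a by (simp add: multi_indices_def)
    next
      case False then show ?thesis using a by (simp add: multi_indices_def)
    qed
  qed (auto simp: multi_indices_def)
  then show ?thesis using finite_bounded_funs by (rule finite_subset)
qed

lemma prod_upd:
  fixes n :: nat and \<alpha> :: "nat \<Rightarrow> nat"
  assumes "i < n"
  shows "(\<Prod>j<n. (g j x::complex) ^ (\<alpha>(i := Suc (\<alpha> i))) j) = g i x * (\<Prod>j<n. g j x ^ \<alpha> j)"
proof -
  have "(\<Prod>j<n. g j x ^ (\<alpha>(i := Suc (\<alpha> i))) j) = (\<Prod>j<n. g j x ^ \<alpha> j * (if j = i then g j x else 1))"
    by (intro prod.cong) auto
  also have "\<dots> = (\<Prod>j<n. g j x ^ \<alpha> j) * (\<Prod>j<n. if j = i then g j x else 1)" by (rule prod.distrib)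
  also have "(\<Prod>j<n. if j = i then g j x else 1) = g i x" using assms by (subst prod.delta) auto
  finally show ?thesis by simp
qed

lemma sum_upd:
  fixes n :: nat and \<alpha> :: "nat \<Rightarrow> nat"
  assumes "i < n"
  shows "(\<Sum>j<n. (\<alpha>(i := Suc (\<alpha> i))) j) = Suc (\<Sum>j<n. \<alpha> j::nat)"
proof -
  have "(\<Sum>j<n. (\<alpha>(i := Suc (\<alpha> i))) j) = (\<Sum>j<n. \<alpha> j + (if j = i then 1 else 0))"
    by (intro sum.cong) auto
  also have "\<dots> = (\<Sum>j<n. \<alpha> j) + (\<Sum>j<n. if j = i then 1 else 0)" by (rule sum.distrib)
  also have "(\<Sum>j<n. if j = i then 1 else 0) = (1::nat)" using assms by (subst sum.delta) auto
  finally show ?thesis by simp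
qed

lemma pp_to_MI:
  assumes "pp E d h" "E \<subseteq> set xs"
  shows "\<exists>c. \<forall>x. h x = (\<Sum>\<alpha>\<in>multi_indices (length xs) d. c \<alpha> * (\<Prod>i<length xs. (xs ! i) x ^ \<alpha> i))"
  using assms
proof (induction rule: pp.induct)
  case (pconst d c)
  let ?z = "\<lambda>_::nat. 0::nat"
  have z: "?z \<in> multi_indices (length xs) d" by (simp add: multi_indices_def)
  show ?case
  proof (intro exI allI)
    fix x
    have "(\<Sum>\<alpha>\<in>multi_indices (length xs) d. (if \<alpha> = ?z then c else 0) * (\<Prod>i<length xs. (xs ! i) x ^ \<alpha> i))
        = (\<Sum>\<alpha>\<in>multi_indices (length xs) d. (if \<alpha> = ?z then c * (\<Prod>i<length xs. (xs ! i) x ^ \<alpha> i) else 0))"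
      by (intro sum.cong) auto
    also have "\<dots> = c" using z MI_finite by (simp add: sum.delta)
    finally show "c = (\<Sum>\<alpha>\<in>multi_indices (length xs) d. (if \<alpha> = ?z then c else 0) * (\<Prod>i<length xs. (xs ! i) x ^ \<alpha> i))" by simp
  qed
next
  case (padd d p q)
  then obtain c1 c2 where c1: "\<forall>x. p x = (\<Sum>\<alpha>\<in>multi_indices (length xs) d. c1 \<alpha> * (\<Prod>i<length xs. (xs ! i) x ^ \<alpha> i))"
    and c2: "\<forall>x. q x = (\<Sum>\<alpha>\<in>multi_indices (length xs) d. c2 \<alpha> * (\<Prod>i<length xs. (xs ! i) x ^ \<alpha> i))" by blast
  show ?case
    by (rule exI[of _ "\<lambda>\<alpha>. c1 \<alpha> + c2 \<alpha>"]) (simp add: c1 c2 distrib_right sum.distrib)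
next
  case (pscale d p c)
  then obtain c1 where c1: "\<forall>x. p x = (\<Sum>\<alpha>\<in>multi_indices (length xs) d. c1 \<alpha> * (\<Prod>i<length xs. (xs ! i) x ^ \<alpha> i))" by blast
  show ?case
    by (rule exI[of _ "\<lambda>\<alpha>. c * c1 \<alpha>"]) (simp add: c1 sum_distrib_left mult.assoc)
next
  case (pmono d p)
  then obtain c1 where c1: "\<forall>x. p x = (\<Sum>\<alpha>\<in>multi_indices (length xs) d. c1 \<alpha> * (\<Prod>i<length xs. (xs ! i) x ^ \<alpha> i))" by blast
  have sub: "multi_indices (length xs) d \<subseteq> multi_indices (length xs) (Suc d)" by (auto simp: multi_indices_def)
  show ?case
  proof (intro exI allI)
    fix x
    show "p x = (\<Sum>\<alpha>\<in>multi_indices (length xs) (Suc d). (if \<alpha> \<in> multi_indices (length xs) d then c1 \<alpha> else 0) * (\<Prod>i<length xs. (xs ! i) x ^ \<alpha> i))"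
      unfolding c1[rule_format]
      by (rule sym, rule sum.mono_neutral_cong_right) (use sub MI_finite in auto)
  qed
next
  case (pgmul g d p)
  let ?n = "length xs"
  let ?M = "\<lambda>d. multi_indices ?n d"
  let ?P = "\<lambda>x \<alpha>. (\<Prod>i<?n. (xs ! i) x ^ \<alpha> i)"
  from pgmul obtain c1 where c1: "\<forall>x. p x = (\<Sum>\<alpha>\<in>?M d. c1 \<alpha> * ?P x \<alpha>)" by blast
  from pgmul have "g \<in> set xs" by blast
  then obtain i where i: "i < ?n" "xs ! i = g" by (auto simp: in_set_conv_nth)
  define \<sigma> where "\<sigma> \<alpha> = \<alpha>(i := Suc (\<alpha> i))" for \<alpha> :: "nat \<Rightarrow> nat"
  define c' where "c' \<beta> = (if 0 < \<beta> i \<and> \<beta>(i := \<beta> i - 1) \<in> ?M d then c1 (\<beta>(i := \<beta> i - 1)) else 0)" for \<beta>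
  have \<sigma>M: "\<sigma> \<alpha> \<in> ?M (Suc d)" if "\<alpha> \<in> ?M d" for \<alpha>
    using that i(1) sum_upd[OF i(1), of \<alpha>] unfolding multi_indices_def \<sigma>_def by auto
  have inj: "inj_on \<sigma> (?M d)"
  proof (rule inj_onI)
    fix a b assume "\<sigma> a = \<sigma> b"
    then have "\<forall>j. (\<sigma> a) j = (\<sigma> b) j" by simp
    then show "a = b" unfolding \<sigma>_def by (metis fun_upd_other fun_upd_same nat.inject ext)
  qed
  have c'\<sigma>: "c' (\<sigma> \<alpha>) = c1 \<alpha>" if "\<alpha> \<in> ?M d" for \<alpha>
  proof -
    have "(\<sigma> \<alpha>)(i := \<sigma> \<alpha> i - 1) = \<alpha>" unfolding \<sigma>_def by auto
    then show ?thesis using that unfolding c'_def by (simp add: \<sigma>_def)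
  qed
  have out: "c' \<beta> = 0" if "\<beta> \<in> ?M (Suc d) - \<sigma> ` ?M d" for \<beta>
  proof (rule ccontr)
    assume "c' \<beta> \<noteq> 0"
    then have h: "0 < \<beta> i" "\<beta>(i := \<beta> i - 1) \<in> ?M d" unfolding c'_def by (auto split: if_splits)
    then have "\<beta> = \<sigma> (\<beta>(i := \<beta> i - 1))" unfolding \<sigma>_def by auto
    then show False using that h(2) by blast
  qed
  show ?case
  proof (intro exI allI)
    fix x
    have "(\<Sum>\<beta>\<in>?M (Suc d). c' \<beta> * ?P x \<beta>) = (\<Sum>\<beta>\<in>\<sigma> ` ?M d. c' \<beta> * ?P x \<beta>)"
      by (rule sym, rule sum.mono_neutral_left) (use \<sigma>M out MI_finite in auto)
    also have "\<dots> = (\<Sum>\<alpha>\<in>?M d. c' (\<sigma> \<alpha>) * ?P x (\<sigma> \<alpha>))" by (rule sum.reindex[OF inj, unfolded comp_def])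
    also have "\<dots> = (\<Sum>\<alpha>\<in>?M d. g x * (c1 \<alpha> * ?P x \<alpha>))"
    proof (intro sum.cong refl)
      fix \<alpha> assume a: "\<alpha> \<in> ?M d"
      have "?P x (\<sigma> \<alpha>) = g x * ?P x \<alpha>"
        unfolding \<sigma>_def using prod_upd[OF i(1), of "\<lambda>j. xs ! j" x \<alpha>] i(2) by simp
      then show "c' (\<sigma> \<alpha>) * ?P x (\<sigma> \<alpha>) = g x * (c1 \<alpha> * ?P x \<alpha>)" using c'\<sigma>[OF a] by simp
    qed
    also have "\<dots> = g x * p x" by (simp add: c1 sum_distrib_left)
    finally show "g x * p x = (\<Sum>\<beta>\<in>?M (Suc d). c' \<beta> * ?P x \<beta>)" by simp
  qed
qed

interpretation fv: vector_space "\<lambda>(c::complex) (f::'a \<Rightarrow> complex) (x::'a). c * f x"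
  by unfold_locales (simp_all add: fun_eq_iff algebra_simps)

lemma fsum_apply: "(\<Sum>i\<in>S. f i) x = (\<Sum>i\<in>S. f i x)"
  by (induction S rule: infinite_finite_induct) auto

lemma biorth:
  fixes S :: "('a \<Rightarrow> complex) set"
  assumes "finite S"
  shows "\<exists>r e p. (\<forall>j<(r::nat). e j \<in> fv.span S) \<and> (\<forall>j<r. \<forall>l<r. e j (p l) = (if j = l then 1 else 0))
            \<and> (\<forall>\<phi>\<in>fv.span S. \<forall>x. \<phi> x = (\<Sum>j<r. \<phi> (p j) * e j x))"
  using assms
proof (induction S rule: finite_induct)
  case empty
  show ?case by (intro exI[of _ 0]) simp
next
  case (insert b S)
  obtain r e p where e_span: "\<forall>j<(r::nat). e j \<in> fv.span S"
    and bio: "\<forall>j<r. \<forall>l<r. e j (p l) = (if j = l then 1 else 0)"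
    and rep: "\<forall>\<phi>\<in>fv.span S. \<forall>x. \<phi> x = (\<Sum>j<r. \<phi> (p j) * e j x)"
    using insert.IH by blast
  define \<pi> where "\<pi> \<phi> x = (\<Sum>j<r. \<phi> (p j) * e j x)" for \<phi> :: "'a \<Rightarrow> complex" and x
  define \<rho> where "\<rho> x = b x - \<pi> b x" for x
  have \<pi>span: "\<pi> \<phi> \<in> fv.span S" for \<phi>
  proof -
    have "\<pi> \<phi> = (\<Sum>j<r. (\<lambda>x. \<phi> (p j) * e j x))" by (simp add: \<pi>_def fun_eq_iff fsum_apply)
    also have "\<dots> \<in> fv.span S" using e_span by (intro fv.span_sum fv.span_scale) auto
    finally show ?thesis .
  qed
  have spS: "fv.span S \<subseteq> fv.span (insert b S)" by (rule fv.span_mono) auto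
  have \<rho>span: "\<rho> \<in> fv.span (insert b S)"
  proof -
    have "\<rho> = b - \<pi> b" by (simp add: \<rho>_def fun_eq_iff)
    also have "\<dots> \<in> fv.span (insert b S)"
    proof (rule fv.span_diff)
      show "b \<in> fv.span (insert b S)" by (rule fv.span_base) simp
      show "\<pi> b \<in> fv.span (insert b S)" using \<pi>span spS by blast
    qed
    finally show ?thesis .
  qed
  have \<rho>p: "\<rho> (p l) = 0" if "l < r" for l
  proof -
    have "\<pi> b (p l) = (\<Sum>j<r. if j = l then b (p j) else 0)"
      unfolding \<pi>_def using bio that by (intro sum.cong) auto
    also have "\<dots> = b (p l)" using that by (subst sum.delta) auto
    finally show ?thesis by (simp add: \<rho>_def)
  qed
  show ?case
  proof (cases "\<forall>x. \<rho> x = 0")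
    case True
    then have "b = \<pi> b" by (simp add: \<rho>_def fun_eq_iff)
    then have "b \<in> fv.span S" using \<pi>span by metis
    then have sp: "fv.span (insert b S) = fv.span S" by (rule fv.span_redundant)
    show ?thesis unfolding sp
      by (intro exI[of _ r] exI[of _ e] exI[of _ p] conjI) (fact e_span, fact bio, fact rep)
  next
    case False
    then obtain q where q: "\<rho> q \<noteq> 0" by blast
    define e' where "e' j = (if j < r then (\<lambda>x. e j x - e j q * \<rho> x / \<rho> q) else (\<lambda>x. \<rho> x / \<rho> q))" for j
    define p' where "p' = p(r := q)"
    show ?thesis
    proof (intro exI[of _ "Suc r"] exI[of _ e'] exI[of _ p'] conjI ballI allI impI)
      fix j assume j: "j < Suc r"
      show "e' j \<in> fv.span (insert b S)"
      proof (cases "j < r")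
        case True
        have "e' j = e j - (\<lambda>x. (e j q / \<rho> q) * \<rho> x)" using True by (simp add: e'_def fun_eq_iff)
        also have "\<dots> \<in> fv.span (insert b S)"
          using True e_span spS \<rho>span by (intro fv.span_diff fv.span_scale) auto
        finally show ?thesis .
      next
        case False
        have "e' j = (\<lambda>x. (1 / \<rho> q) * \<rho> x)" using False by (simp add: e'_def fun_eq_iff)
        also have "\<dots> \<in> fv.span (insert b S)" using \<rho>span by (intro fv.span_scale)
        finally show ?thesis .
      qed
    next
      fix j l assume j: "j < Suc r" and l: "l < Suc r"
      show "e' j (p' l) = (if j = l then 1 else 0)"
      proof (cases "j < r")
        case True
        show ?thesis
        proof (cases "l < r")
          case True
          then show ?thesis using \<open>j < r\<close> bio \<rho>p[OF True] by (simp add: e'_def p'_def)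
        next
          case False
          then have "l = r" using l by simp
          then show ?thesis using \<open>j < r\<close> q by (simp add: e'_def p'_def)
        qed
      next
        case False
        then have jr: "j = r" using j by simp
        show ?thesis
        proof (cases "l < r")
          case True
          then show ?thesis using jr \<rho>p[OF True] by (simp add: e'_def p'_def)
        next
          case False
          then have "l = r" using l by simp
          then show ?thesis using jr q by (simp add: e'_def p'_def)
        qed
      qed
    next
      fix \<phi> x assume \<phi>: "\<phi> \<in> fv.span (insert b S)"
      then obtain k where "\<phi> - (\<lambda>x. k * b x) \<in> fv.span S" unfolding fv.span_insert by blast
      moreover have "\<phi> - (\<lambda>x. k * b x) = (\<lambda>y. \<phi> y - k * b y)" by (simp add: fun_eq_iff)
      ultimately have \<psi>: "(\<lambda>y. \<phi> y - k * b y) \<in> fv.span S" by simp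
      have \<pi>\<phi>: "\<pi> \<phi> y = \<phi> y - k * \<rho> y" for y
      proof -
        have "\<pi> \<phi> y = \<pi> (\<lambda>y. \<phi> y - k * b y) y + k * \<pi> b y"
          unfolding \<pi>_def by (simp add: algebra_simps sum.distrib sum_distrib_left sum_subtractf)
        also have "\<pi> (\<lambda>y. \<phi> y - k * b y) y = \<phi> y - k * b y"
        proof -
          have "(\<lambda>y. \<phi> y - k * b y) y = (\<Sum>j<r. (\<lambda>y. \<phi> y - k * b y) (p j) * e j y)"
            using spec[OF bspec[OF rep \<psi>], of y] by simp
          then show ?thesis unfolding \<pi>_def by simp
        qed
        finally show ?thesis by (simp add: \<rho>_def algebra_simps)
      qed
      have "(\<Sum>j<Suc r. \<phi> (p' j) * e' j x) = (\<Sum>j<r. \<phi> (p j) * (e j x - e j q * \<rho> x / \<rho> q)) + \<phi> q * (\<rho> x / \<rho> q)"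
        by (simp add: p'_def e'_def)
      also have "(\<Sum>j<r. \<phi> (p j) * (e j x - e j q * \<rho> x / \<rho> q)) = \<pi> \<phi> x - \<pi> \<phi> q * \<rho> x / \<rho> q"
        unfolding \<pi>_def by (simp add: algebra_simps sum_subtractf sum_distrib_left sum_divide_distrib sum_distrib_right)
      also have "\<pi> \<phi> x - \<pi> \<phi> q * \<rho> x / \<rho> q + \<phi> q * (\<rho> x / \<rho> q) = \<phi> x"
        unfolding \<pi>\<phi> using q by (simp add: field_simps)
      finally show "\<phi> x = (\<Sum>j<Suc r. \<phi> (p' j) * e' j x)" by simp
    qed
  qed
qed

lemma additive_prim:
  assumes add: "\<forall>x y. g (x + y) = g x + g y" and ga: "g a \<noteq> 0"
  shows "k_primitive 1 g"
proof -
  have g0: "g 0 = 0" using add[rule_format, of 0 0] by simp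
  have two: "coder g x0 [u, v] = 0" for x0 u v by (simp add: add)
  have "coder g 0 ys = 0" if "1 < length ys" for ys
  proof -
    define n where "n = length ys - 2"
    have "length (drop n ys) = 2" using that by (simp add: n_def)
    then obtain u v where uv: "drop n ys = [u, v]"
      by (metis (no_types, lifting) One_nat_def Suc_1 length_0_conv length_Suc_conv)
    have "ys = take n ys @ [u, v]" using uv by (metis append_take_drop_id)
    then show ?thesis using coder_append_zero[of g "[u, v]" 0 "take n ys"] two by metis
  qed
  moreover have "coder g 0 [a] \<noteq> 0" using ga g0 by simp
  ultimately show ?thesis unfolding k_primitive_def
    by (metis One_nat_def length_Cons list.size(3))
qed

lemma A_subspace:
  assumes A: "coproduct_algebra A"
  shows "fv.subspace A"
  unfolding fv.subspace_def
proof (intro conjI ballI allI)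
  show "0 \<in> A" using A unfolding coproduct_algebra_def zero_fun_def by blast
  fix f g assume "f \<in> A" "g \<in> A"
  then show "f + g \<in> A" using A unfolding coproduct_algebra_def plus_fun_def by blast
next
  fix c f assume "f \<in> A"
  then show "(\<lambda>x. c * f x) \<in> A" using A unfolding coproduct_algebra_def by blast
qed

lemma add_subspace: "fv.subspace {\<phi>::'a::ab_group_add \<Rightarrow> complex. \<forall>x y. \<phi> (x + y) = \<phi> x + \<phi> y}"
  unfolding fv.subspace_def by (auto simp: algebra_simps)

lemma main_lemma:
  assumes A: "coproduct_algebra A"
  shows "h \<in> A \<Longrightarrow> deg_le h d \<Longrightarrow> \<exists>E. finite E \<and> E \<subseteq> A \<and> (\<forall>g\<in>E. k_primitive 1 g) \<and> pp E d h"
proof (induction d arbitrary: h)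
  case 0
  have dz: "\<forall>x0 ys. 0 < length ys \<longrightarrow> coder h x0 ys = 0" using "0.prems"(2) unfolding deg_le_def .
  have hx: "h x = h 0" for x
  proof -
    from dz[rule_format, of "[x]" 0] have "coder h 0 [x] = 0" by simp
    then show ?thesis by simp
  qed
  define c where "c = h 0"
  have "h = (\<lambda>_. c)" using hx by (simp add: fun_eq_iff c_def)
  moreover have "pp {} 0 (\<lambda>_. c)" by (rule pp.pconst)
  ultimately have "pp {} 0 h" by simp
  then show ?case by (intro exI[of _ "{}"]) simp
next
  case (Suc e)
  note hA = Suc.prems(1) and hdeg = Suc.prems(2)
  from A hA obtain N h' h'' where hc: "\<forall>i<(N::nat). h' i \<in> A \<and> h'' i \<in> A"
    and hcop: "\<forall>x y. h (x + y) = (\<Sum>i<N. h' i x * h'' i y)"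
    unfolding coproduct_algebra_def by blast
  define T where "T = insert (\<lambda>_. 1::complex) (h' ` {..<N})"
  have finT: "finite T" by (simp add: T_def)
  have TA: "T \<subseteq> A" using A hc unfolding T_def coproduct_algebra_def by auto
  have subA: "fv.subspace A" by (rule A_subspace[OF A])
  have spanTA: "fv.span T \<subseteq> A" by (rule fv.span_minimal[OF TA subA])
  have slice_gen: "(\<lambda>x0. coder h (x0 + t) zs) \<in> fv.span T" for zs t
  proof (induction zs arbitrary: t)
    case Nil
    have "(\<lambda>x0. coder h (x0 + t) []) = (\<Sum>i<N. (\<lambda>x. h'' i t * h' i x))"
      by (simp add: fun_eq_iff hcop mult.commute fsum_apply)
    also have "\<dots> \<in> fv.span T"
    proof (rule fv.span_sum)
      fix i assume "i \<in> {..<N}"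
      then have "h' i \<in> fv.span T" by (intro fv.span_base) (simp add: T_def)
      then show "(\<lambda>x. h'' i t * h' i x) \<in> fv.span T" by (rule fv.span_scale)
    qed
    finally show ?case .
  next
    case (Cons y zs)
    have "(\<lambda>x0. coder h (x0 + t) (y # zs)) = (\<lambda>x0. coder h (x0 + (t + y)) zs) - (\<lambda>x0. coder h (x0 + t) zs)"
      by (simp add: fun_eq_iff add.assoc)
    also have "\<dots> \<in> fv.span T" by (rule fv.span_diff[OF Cons.IH Cons.IH])
    finally show ?case .
  qed
  have slice_in: "(\<lambda>y. coder h 0 (y # zs)) \<in> fv.span T" for zs
  proof -
    have eq: "(\<lambda>y. coder h 0 (y # zs)) = (\<lambda>y. coder h (y + 0) zs) - (\<lambda>y. coder h 0 zs * (\<lambda>_. 1::complex) y)"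
      by (simp add: fun_eq_iff)
    have "(\<lambda>_. 1::complex) \<in> fv.span T" by (intro fv.span_base) (simp add: T_def)
    then have "(\<lambda>y. coder h 0 zs * (\<lambda>_. 1::complex) y) \<in> fv.span T" by (rule fv.span_scale)
    then show ?thesis unfolding eq using slice_gen by (intro fv.span_diff)
  qed
  define \<Phi> where "\<Phi> = {\<phi>. \<exists>zs. length zs = e \<and> \<phi> = (\<lambda>y. coder h 0 (y # zs))}"
  have \<Phi>T: "\<Phi> \<subseteq> fv.span T" using slice_in unfolding \<Phi>_def by blast
  obtain B0 where B0: "B0 \<subseteq> \<Phi>" "fv.independent B0" "\<Phi> \<subseteq> fv.span B0"
    by (rule fv.maximal_independent_subset)
  have finB0: "finite B0" using fv.independent_span_bound[OF finT B0(2)] B0(1) \<Phi>T by blast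
  obtain r g p where gspan: "\<forall>j<(r::nat). g j \<in> fv.span B0"
    and gbio: "\<forall>j<r. \<forall>l<r. g j (p l) = (if j = l then 1 else 0)"
    and grep: "\<forall>\<phi>\<in>fv.span B0. \<forall>x. \<phi> x = (\<Sum>j<r. \<phi> (p j) * g j x)"
    using biorth[OF finB0] by blast
  have B0add: "B0 \<subseteq> {\<phi>. \<forall>x y. \<phi> (x + y) = \<phi> x + \<phi> y}"
  proof
    fix \<phi> assume "\<phi> \<in> B0"
    then obtain zs where "length zs = e" "\<phi> = (\<lambda>y. coder h 0 (y # zs))" using B0(1) unfolding \<Phi>_def by blast
    then show "\<phi> \<in> {\<phi>. \<forall>x y. \<phi> (x + y) = \<phi> x + \<phi> y}"
      using additive_front[OF hdeg] by (simp del: coder.simps)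
  qed
  have gadd: "\<forall>x y. g j (x + y) = g j x + g j y" if "j < r" for j
    using fv.span_minimal[OF B0add add_subspace] gspan that by blast
  have B0A: "B0 \<subseteq> A" using B0(1) \<Phi>T spanTA by blast
  have gA: "g j \<in> A" if "j < r" for j
    using fv.span_minimal[OF B0A subA] gspan that by blast
  have gprim: "k_primitive 1 (g j)" if "j < r" for j
    using additive_prim[OF gadd[OF that], of "p j"] gbio that by simp
  define E1 where "E1 = g ` {..<r}"
  have decomp: "coder h 0 (ps @ x # zs) = (\<Sum>j<r. coder h 0 (ps @ p j # zs) * g j x)"
    if "length ps + length zs = e" for ps zs x
  proof -
    have "(\<lambda>y. coder h 0 (y # ps @ zs)) \<in> \<Phi>" using that unfolding \<Phi>_def
      by (intro CollectI exI[of _ "ps @ zs"]) (simp del: coder.simps)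
    then have "(\<lambda>y. coder h 0 (y # ps @ zs)) \<in> fv.span B0" using B0(3) by blast
    from spec[OF bspec[OF grep this], of x]
    have "coder h 0 (x # ps @ zs) = (\<Sum>j<r. coder h 0 (p j # ps @ zs) * g j x)" by (simp del: coder.simps)
    then show ?thesis by (simp only: coder_move)
  qed
  define D where "D = (\<lambda>x. coder h 0 (replicate (Suc e) x))"
  have ppD: "pp E1 (Suc e) D"
    using dec[OF decomp, where ps="[]" and l="Suc e"] unfolding D_def E1_def by simp
  have E1A: "E1 \<subseteq> A" using gA unfolding E1_def by blast
  have DA: "D \<in> A" using pp_in[OF ppD E1A A] .
  define h1 where "h1 = (\<lambda>x. (- (1 / fact (Suc e))) * D x + h x)"
  have Aadd: "\<And>f g. f \<in> A \<Longrightarrow> g \<in> A \<Longrightarrow> (\<lambda>x. f x + g x) \<in> A"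
    using A unfolding coproduct_algebra_def by blast
  have Ascale: "\<And>c f. f \<in> A \<Longrightarrow> (\<lambda>x. c * f x) \<in> A"
    using A unfolding coproduct_algebra_def by blast
  have h1A: "h1 \<in> A" unfolding h1_def using Aadd[OF Ascale[OF DA] hA] .
  have h1deg: "deg_le h1 e"
    unfolding deg_le_def
  proof (intro allI impI)
    fix x0 and ys :: "'a list" assume len: "e < length ys"
    have lin: "coder h1 x0 ys = (- (1 / fact (Suc e))) * coder D x0 ys + coder h x0 ys"
      unfolding h1_def by (rule coder_lin)
    show "coder h1 x0 ys = 0"
    proof (cases "length ys = Suc e")
      case True
      have "coder h x0 ys = coder h 0 ys" by (rule indep_x0[OF hdeg True])
      moreover have "coder D x0 ys = fact (Suc e) * coder h 0 ys" unfolding D_def by (rule diag(1)[OF hdeg True])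
      ultimately show ?thesis unfolding lin by (simp del: coder.simps fact_Suc)
    next
      case False then have gt: "Suc e < length ys" using len by simp
      have "coder h x0 ys = 0" using hdeg gt unfolding deg_le_def by blast
      moreover have "coder D x0 ys = 0" unfolding D_def by (rule diag(2)[OF hdeg gt])
      ultimately show ?thesis unfolding lin by simp
    qed
  qed
  from Suc.IH[OF h1A h1deg] obtain E2 where E2: "finite E2" "E2 \<subseteq> A" "\<forall>g\<in>E2. k_primitive 1 g" "pp E2 e h1"
    by blast
  define E where "E = E2 \<union> E1"
  have "pp E (Suc e) h1" using pp.pmono[OF pp_subset[OF E2(4)]] unfolding E_def by blast
  moreover have "pp E (Suc e) (\<lambda>x. (1 / fact (Suc e)) * D x)"
    using pp.pscale[OF pp_subset[OF ppD]] unfolding E_def by blast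
  ultimately have "pp E (Suc e) (\<lambda>x. h1 x + (1 / fact (Suc e)) * D x)" by (rule pp.padd)
  moreover have "(\<lambda>x. h1 x + (1 / fact (Suc e)) * D x) = h" by (simp add: h1_def fun_eq_iff)
  ultimately have "pp E (Suc e) h" by simp
  moreover have "finite E" using E2(1) unfolding E_def E1_def by simp
  moreover have "E \<subseteq> A" using E2(2) E1A unfolding E_def by blast
  moreover have "\<forall>g\<in>E. k_primitive 1 g" using E2(3) gprim unfolding E_def E1_def by blast
  ultimately show ?case by blast
qed

theorem mainTheorem2:
  fixes A :: "('a::ab_group_add \<Rightarrow> complex) set" and f :: "'a \<Rightarrow> complex" and k :: nat
  assumes "coproduct_algebra A"
    and "k \<ge> 1"
    and "f \<in> A"
    and "k_primitive k f"
  shows "\<exists>(n::nat) (g :: nat \<Rightarrow> 'a \<Rightarrow> complex) (c :: (nat \<Rightarrow> nat) \<Rightarrow> complex).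
           (\<forall>i<n. g i \<in> A \<and> k_primitive 1 (g i)) \<and>
           (\<forall>x. f x = (\<Sum>\<alpha>\<in>multi_indices n k. c \<alpha> * (\<Prod>i<n. g i x ^ \<alpha> i)))"
proof -
  have "deg_le f k"
    by (rule deg_le_from_zero) (use assms(4) in \<open>auto simp: k_primitive_def\<close>)
  from main_lemma[OF assms(1) assms(3) this] obtain E where
    E: "finite E" "E \<subseteq> A" "\<forall>g\<in>E. k_primitive 1 g" "pp E k f" by blast
  obtain xs where xs: "set xs = E" using finite_list[OF E(1)] by blast
  from pp_to_MI[OF E(4)] xs obtain c where
    c: "\<forall>x. f x = (\<Sum>\<alpha>\<in>multi_indices (length xs) k. c \<alpha> * (\<Prod>i<length xs. (xs ! i) x ^ \<alpha> i))" by blast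
  have "\<forall>i<length xs. (xs ! i) \<in> A \<and> k_primitive 1 (xs ! i)"
    using E(2,3) xs nth_mem by blast
  then show ?thesis using c by blast
qed

end
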